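(* Let $\ell\ge 1$ be an integer and let $P$ be a set of $n_\ell$ points. There exists a set system $\mathcal{Q}\subseteq 2^P$ such that: (1) $\mathcal{Q}$ consists of exactly $\lceil n_{\ell-1}/2\rceil+1$ sets, each of size $n_{\ell-1}$; (2) for every $p\in P$ there is a set in $\mathcal{Q}$ not containing $p$; (3) for every $p\in P$ there is a $q\in P$ such that every set in $\mathcal{Q}$ contains at least one of $p$ and $q$.
   Context: The sequence $n_0,n_1,\ldots$ is defined by $n_0=1$ and, for $i>0$, $n_i=\left(\lceil n_{i-1}/2\rceil+1\right)\cdot\left(\lfloor n_{i-1}/2\rfloor+1\right)$. *)

theory Defs
  imports Main
begin

text \<open>The sequence n_0 = 1, n_i = (ceil(n_{i-1}/2)+1) * (floor(n_{i-1}/2)+1).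
  For natural m, ceil(m/2) = (m+1) div 2 and floor(m/2) = m div 2.\<close>
fun nseq :: "nat \<Rightarrow> nat" where
  "nseq 0 = 1"
| "nseq (Suc i) = ((nseq i + 1) div 2 + 1) * (nseq i div 2 + 1)"

end

theory Submission
  imports Defs
begin

lemma nseq_pos: "nseq i \<ge> 1"
  by (induction i) auto

lemma construct:
  fixes P :: "'a set" and a b :: nat
  assumes a2: "a \<ge> 2" and b1: "b \<ge> 1" and fin: "finite P" and cP: "card P = a * b"
  shows "\<exists>Q :: 'a set set. Q \<subseteq> Pow P
    \<and> card Q = a
    \<and> (\<forall>S\<in>Q. card S = a + b - 2)
    \<and> (\<forall>p\<in>P. \<exists>S\<in>Q. p \<notin> S)
    \<and> (\<forall>p\<in>P. \<exists>q\<in>P. \<forall>S\<in>Q. p \<in> S \<or> q \<in> S)"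
proof -
  define D where "D = {..<a} \<times> {..<b}"
  have "card D = card P" using cP by (simp add: D_def card_cartesian_product)
  moreover have "finite D" by (simp add: D_def)
  ultimately obtain f where f: "bij_betw f D P"
    using fin finite_same_card_bij by blast
  have inj: "inj_on f D" and img: "f ` D = P" using f by (auto simp: bij_betw_def)
  define T where "T k = (({..<a} - {k}) \<times> {0::nat}) \<union> ({k} \<times> {1..<b})" for k
  have TD: "k < a \<Longrightarrow> T k \<subseteq> D" for k using b1 by (auto simp: T_def D_def)
  have memT: "x \<in> D \<Longrightarrow> k < a \<Longrightarrow> (f x \<in> f ` T k) = (x \<in> T k)" for x k
    using inj TD by (meson inj_on_image_mem_iff)
  define Q where "Q = (\<lambda>k. f ` T k) ` {..<a}"
  have cT: "k < a \<Longrightarrow> card (T k) = a + b - 2" for k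
  proof -
    assume k: "k < a"
    have "card (T k) = card (({..<a} - {k}) \<times> {0::nat}) + card ({k} \<times> {1..<b})"
      unfolding T_def by (rule card_Un_disjoint) auto
    also have "\<dots> = (a - 1) + (b - 1)" using k by (simp add: card_cartesian_product)
    finally show ?thesis using a2 b1 by simp
  qed
  have h0: "k < a \<Longrightarrow> (k, 0) \<in> D" for k using b1 by (simp add: D_def)
  have injQ: "inj_on (\<lambda>k. f ` T k) {..<a}"
  proof (rule inj_onI)
    fix i j assume i: "i \<in> {..<a}" and j: "j \<in> {..<a}" and e: "f ` T i = f ` T j"
    show "i = j"
    proof (rule ccontr)
      assume "i \<noteq> j"
      hence "(i,0) \<in> T j" "(i,0) \<notin> T i" using i by (auto simp: T_def)
      thus False using e memT[OF h0, of i i] memT[OF h0, of i j] i j by auto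
    qed
  qed
  have "Q \<subseteq> Pow P" using TD img by (auto simp: Q_def)
  moreover have "card Q = a" using injQ by (simp add: Q_def card_image)
  moreover have "\<forall>S\<in>Q. card S = a + b - 2"
    using cT TD inj by (auto simp: Q_def card_image inj_on_subset)
  moreover have "\<forall>p\<in>P. \<exists>S\<in>Q. p \<notin> S"
  proof
    fix p assume "p \<in> P"
    then obtain x where x: "x \<in> D" "p = f x" using img by blast
    obtain r c where rc: "x = (r, c)" by force
    have r: "r < a" using x rc by (simp add: D_def)
    show "\<exists>S\<in>Q. p \<notin> S"
    proof (cases "c = 0")
      case True
      hence "x \<notin> T r" using rc by (simp add: T_def)
      thus ?thesis using memT[OF x(1) r] x r by (auto simp: Q_def)
    next
      case False
      define k :: nat where "k = (if r = 0 then 1 else 0)"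
      have k: "k < a" "k \<noteq> r" using a2 by (auto simp: k_def)
      hence "x \<notin> T k" using rc False by (auto simp: T_def)
      thus ?thesis using memT[OF x(1) k(1)] x k by (auto simp: Q_def)
    qed
  qed
  moreover have "\<forall>p\<in>P. \<exists>q\<in>P. \<forall>S\<in>Q. p \<in> S \<or> q \<in> S"
  proof
    fix p assume "p \<in> P"
    then obtain x where x: "x \<in> D" "p = f x" using img by blast
    obtain r c where rc: "x = (r, c)" by force
    have r: "r < a" and cb: "c < b" using x rc by (auto simp: D_def)
    show "\<exists>q\<in>P. \<forall>S\<in>Q. p \<in> S \<or> q \<in> S"
    proof (cases "c = 0")
      case True
      define k :: nat where "k = (if r = 0 then 1 else 0)"
      have k: "k < a" "k \<noteq> r" using a2 by (auto simp: k_def)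
      have "\<forall>S\<in>Q. p \<in> S \<or> f (k,0) \<in> S"
      proof
        fix S assume "S \<in> Q"
        then obtain j where j: "j < a" "S = f ` T j" by (auto simp: Q_def)
        have "x \<in> T j \<or> (k,0) \<in> T j" using True rc k j r by (auto simp: T_def)
        thus "p \<in> S \<or> f (k,0) \<in> S" using memT[OF x(1) j(1)] memT[OF h0[OF k(1)] j(1)] x j by auto
      qed
      moreover have "f (k,0) \<in> P" using img h0[OF k(1)] by blast
      ultimately show ?thesis by blast
    next
      case False
      have "\<forall>S\<in>Q. p \<in> S \<or> f (r,0) \<in> S"
      proof
        fix S assume "S \<in> Q"
        then obtain j where j: "j < a" "S = f ` T j" by (auto simp: Q_def)
        have "x \<in> T j \<or> (r,0) \<in> T j" using False rc r cb j by (auto simp: T_def)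
        thus "p \<in> S \<or> f (r,0) \<in> S" using memT[OF x(1) j(1)] memT[OF h0[OF r] j(1)] x j by auto
      qed
      moreover have "f (r,0) \<in> P" using img h0[OF r] by blast
      ultimately show ?thesis by blast
    qed
  qed
  ultimately show ?thesis by blast
qed

theorem lemma3:
  fixes P :: "'a set" and l :: nat
  assumes "l \<ge> 1" and "finite P" and "card P = nseq l"
  shows "\<exists>Q :: 'a set set. Q \<subseteq> Pow P
    \<and> card Q = (nseq (l - 1) + 1) div 2 + 1
    \<and> (\<forall>S\<in>Q. card S = nseq (l - 1))
    \<and> (\<forall>p\<in>P. \<exists>S\<in>Q. p \<notin> S)
    \<and> (\<forall>p\<in>P. \<exists>q\<in>P. \<forall>S\<in>Q. p \<in> S \<or> q \<in> S)"
proof -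
  define m where "m = nseq (l - 1)"
  have l: "l = Suc (l - 1)" using assms(1) by simp
  have cP: "card P = ((m + 1) div 2 + 1) * (m div 2 + 1)"
    using assms(3) l m_def by (metis nseq.simps(2))
  have m1: "m \<ge> 1" using nseq_pos m_def by simp
  have sum: "((m + 1) div 2 + 1) + (m div 2 + 1) - 2 = m" by simp
  from construct[OF _ _ assms(2) cP] m1 sum show ?thesis
    unfolding m_def[symmetric] by auto
qed

end
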